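(* Let $(V,f)$ be a cubic space with $\mathrm{rrk}(f)=\infty$. Given a good table $T$ with $r$ rows, there is a good table $T'\supset T$ obtained by adding a new $(r+1)$-st row (consisting of a new element $v_{r+1}$ and no $w$'s).
   Context: $k$ is algebraically closed of characteristic different from $2,3$. For $V$ with basis and dual coordinates $x_i$, $P_n(V)$ is the space of formal, possibly infinite, $k$-linear combinations of degree-$n$ monomials in the $x_i$. The strength of a homogeneous $h\in P_n(V)$, $n\ge1$, is the least $s$ with $h=\sum_{i=1}^s a_ib_i$, $a_i,b_i$ homogeneous of positive degree less than $n$ ($\infty$ if none). $P_2^\circ(V)$ is the subspace of finite-strength quadratic forms and $\overline{P}_2(V)=P_2(V)/P_2^\circ(V)$. For $v\in V$, $f_v=\partial_vf\in P_2(V)$ is the directional derivative (in coordinates $\partial_{v_i}f=\partial f/\partial x_i$), and $\overline{q}(v)$ is the image of $f_v$ in $\overline{P}_2(V)$; $\overline{Q}=\overline{q}(V)$, and $\mathrm{rrk}(f)=\dim\overline{Q}$. $\langle-,-,-\rangle_f$ is the symmetric trilinear form on $V$ with $\langle v,v,v\rangle_f=f(v)$; then $f_v(w)=3\langle v,w,w\rangle_f$. A good table is a finite table with rows $v_i\mid w_{i,1},\dots,w_{i,n_i}$ ($1\le i\le r$, $n_i\ge0$), entries in $V$, such that: (a) the entries are linearly independent; (b) $\langle v_i,w_{i,j},w_{i,j}\rangle_f=1$ for all $i,j$, and whenever $x,y,z$ are entries with $\langle x,y,z\rangle_f\ne0$, then up to permutation $x=v_i$ and $y=z=w_{i,j}$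 for some $i,j$; (c) the elements $\overline{q}(v_i)$ ($1\le i\le r$) together with those $\overline{q}(w_{i,j})$ that are nonzero are pairwise distinct and linearly independent in $\overline{Q}$. *)

theory Defs
  imports "HOL-Library.Multiset" "HOL-Library.Extended_Nat" "HOL-Computational_Algebra.Polynomial"
begin

text \<open>The space V has basis indexed by the type 'i; its elements are finitely
supported coordinate vectors 'i \<Rightarrow> 'k. A monomial in the dual coordinates x_i is a
finite multiset of indices; an element of P_n(V) (formal, possibly infinite
combination of degree-n monomials) is a coefficient function on monomials which
vanishes off monomials of size n.\<close>

definition vecs :: "('i \<Rightarrow> 'k::zero) set" where
  "vecs = {v. finite {i. v i \<noteq> 0}}"

definition homog :: "nat \<Rightarrow> ('i multiset \<Rightarrow> 'k::zero) \<Rightarrow> bool" where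
  "homog n p \<longleftrightarrow> (\<forall>m. size m \<noteq> n \<longrightarrow> p m = 0)"

definition pmul :: "('i multiset \<Rightarrow> 'k::comm_ring_1) \<Rightarrow> ('i multiset \<Rightarrow> 'k) \<Rightarrow> 'i multiset \<Rightarrow> 'k" where
  "pmul a b = (\<lambda>m. \<Sum>m1\<in>{m1. m1 \<subseteq># m}. a m1 * b (m - m1))"

definition strength_rep :: "nat \<Rightarrow> ('i multiset \<Rightarrow> 'k::comm_ring_1) \<Rightarrow> nat \<Rightarrow> bool" where
  "strength_rep n h s \<longleftrightarrow>
     (\<exists>(a :: nat \<Rightarrow> 'i multiset \<Rightarrow> 'k) (b :: nat \<Rightarrow> 'i multiset \<Rightarrow> 'k) da db.
        (\<forall>j<s. 0 < da j \<and> da j < n \<and> 0 < db j \<and> db j < n \<and>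
               homog (da j) (a j) \<and> homog (db j) (b j)) \<and>
        h = (\<lambda>m. \<Sum>j<s. pmul (a j) (b j) m))"

definition strength :: "nat \<Rightarrow> ('i multiset \<Rightarrow> 'k::comm_ring_1) \<Rightarrow> enat" where
  "strength n h = (if \<exists>s. strength_rep n h s then enat (LEAST s. strength_rep n h s) else \<infinity>)"

definition P2fin :: "('i multiset \<Rightarrow> 'k::comm_ring_1) set" where
  "P2fin = {h. homog 2 h \<and> strength 2 h \<noteq> \<infinity>}"

definition pder :: "'i \<Rightarrow> ('i multiset \<Rightarrow> 'k::comm_ring_1) \<Rightarrow> 'i multiset \<Rightarrow> 'k" where
  "pder i p = (\<lambda>m. of_nat (count m i + 1) * p (add_mset i m))"

definition dder :: "('i \<Rightarrow> 'k::comm_ring_1) \<Rightarrow> ('i multiset \<Rightarrow> 'k) \<Rightarrow> 'i multiset \<Rightarrow> 'k" where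
  "dder v p = (\<lambda>m. \<Sum>i\<in>{i. v i \<noteq> 0}. v i * pder i p m)"

text \<open>Symmetric trilinear form with <v,v,v>_f = f(v): (1/6) d_u d_v d_w f.\<close>
definition tri :: "('i multiset \<Rightarrow> 'k::field) \<Rightarrow> ('i \<Rightarrow> 'k) \<Rightarrow> ('i \<Rightarrow> 'k) \<Rightarrow> ('i \<Rightarrow> 'k) \<Rightarrow> 'k" where
  "tri f u v w = dder u (dder v (dder w f)) {#} / 6"

text \<open>The family qbar(vs!0), ..., qbar(vs!(n-1)) is linearly independent in
  the quotient P_2/P_2^\<circ>.\<close>
definition qbar_lin_indep :: "('i multiset \<Rightarrow> 'k::field) \<Rightarrow> ('i \<Rightarrow> 'k) list \<Rightarrow> bool" where
  "qbar_lin_indep f vs \<longleftrightarrow>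
     (\<forall>c :: nat \<Rightarrow> 'k. (\<lambda>m. \<Sum>j<length vs. c j * dder (vs!j) f m) \<in> P2fin
        \<longrightarrow> (\<forall>j<length vs. c j = 0))"

text \<open>rrk(f) = dim Qbar = \<infinity>: Qbar is not spanned by finitely many qbar(u).\<close>
definition rrk_infinite :: "('i multiset \<Rightarrow> 'k::field) \<Rightarrow> bool" where
  "rrk_infinite f \<longleftrightarrow>
     \<not> (\<exists>S. finite S \<and> S \<subseteq> vecs \<and>
          (\<forall>v\<in>vecs. \<exists>c :: ('i \<Rightarrow> 'k) \<Rightarrow> 'k.
             (\<lambda>m. dder v f m - (\<Sum>u\<in>S. c u * dder u f m)) \<in> P2fin))"

definition lin_indep_vecs :: "('i \<Rightarrow> 'k::field) list \<Rightarrow> bool" where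
  "lin_indep_vecs es \<longleftrightarrow>
     (\<forall>c :: nat \<Rightarrow> 'k. (\<forall>i. (\<Sum>j<length es. c j * (es!j) i) = 0) \<longrightarrow> (\<forall>j<length es. c j = 0))"

text \<open>A table is a list of rows (v_i, [w_i1, ..., w_in_i]).\<close>
definition entries :: "(('i \<Rightarrow> 'k) \<times> ('i \<Rightarrow> 'k) list) list \<Rightarrow> ('i \<Rightarrow> 'k) list" where
  "entries T = concat (map (\<lambda>(v, ws). v # ws) T)"

definition good_table :: "('i multiset \<Rightarrow> 'k::field) \<Rightarrow> (('i \<Rightarrow> 'k) \<times> ('i \<Rightarrow> 'k) list) list \<Rightarrow> bool" where
  "good_table f T \<longleftrightarrow>
     set (entries T) \<subseteq> vecs \<and>
     lin_indep_vecs (entries T) \<and>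
     (\<forall>(v, ws)\<in>set T. \<forall>w\<in>set ws. tri f v w w = 1) \<and>
     (\<forall>x\<in>set (entries T). \<forall>y\<in>set (entries T). \<forall>z\<in>set (entries T).
        tri f x y z \<noteq> 0 \<longrightarrow> (\<exists>(v, ws)\<in>set T. \<exists>w\<in>set ws. {#x, y, z#} = {#v, w, w#})) \<and>
     (let L = map fst T @ filter (\<lambda>w. dder w f \<notin> P2fin) (concat (map snd T)) in
        (\<forall>j<length L. \<forall>k<length L. j \<noteq> k \<longrightarrow>
            (\<lambda>m. dder (L!j) f m - dder (L!k) f m) \<notin> P2fin) \<and>
        qbar_lin_indep f L)"

end

theory Submission
  imports Defs
begin

lemma sum_lessThan_add_split:
  "(\<Sum>i<m+n. F i) = (\<Sum>i<m. F i) + (\<Sum>i<n. F (m+i))" for F :: "nat \<Rightarrow> 'a::comm_monoid_add"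
  by (induction n) (simp_all add: add.assoc)

lemma list_sum_append:
  "(\<Sum>i<length (xs@ys). h i ((xs@ys)!i)) =
   (\<Sum>i<length xs. h i (xs!i)) + (\<Sum>i<length ys. h (length xs + i) (ys!i))"
  for h :: "nat \<Rightarrow> 'b \<Rightarrow> 'a::comm_monoid_add"
  by (simp add: sum_lessThan_add_split nth_append)

lemma dder_eq_sum:
  assumes "finite F" "{t. v t \<noteq> 0} \<subseteq> F"
  shows "dder v p m = (\<Sum>t\<in>F. v t * pder t p m)"
  unfolding dder_def using assms
  by (intro sum.mono_neutral_left) auto

lemma vecs_bin:
  fixes x y :: "'i \<Rightarrow> 'k::field"
  assumes "x \<in> vecs" "y \<in> vecs"
  shows "(\<lambda>i. x i + c * y i) \<in> vecs"
proof -
  have "{i. x i + c * y i \<noteq> 0} \<subseteq> {i. x i \<noteq> 0} \<union> {i. y i \<noteq> 0}" by force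
  then show ?thesis using assms unfolding vecs_def by (auto intro: finite_subset)
qed

lemma dder_bin_vec:
  fixes x y :: "'i \<Rightarrow> 'k::field"
  assumes "x \<in> vecs" "y \<in> vecs"
  shows "dder (\<lambda>i. x i + c * y i) p = (\<lambda>m. dder x p m + c * dder y p m)"
proof
  fix m
  let ?F = "{i. x i \<noteq> 0} \<union> {i. y i \<noteq> 0}"
  have fF: "finite ?F" using assms unfolding vecs_def by auto
  have "dder (\<lambda>i. x i + c * y i) p m = (\<Sum>t\<in>?F. (x t + c * y t) * pder t p m)"
    by (rule dder_eq_sum[OF fF]) auto
  also have "\<dots> = (\<Sum>t\<in>?F. x t * pder t p m) + c * (\<Sum>t\<in>?F. y t * pder t p m)"
    by (simp add: sum.distrib sum_distrib_left algebra_simps)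
  also have "\<dots> = dder x p m + c * dder y p m"
    using dder_eq_sum[OF fF, of x] dder_eq_sum[OF fF, of y] by auto
  finally show "dder (\<lambda>i. x i + c * y i) p m = dder x p m + c * dder y p m" .
qed

lemma pder_bin: "pder i (\<lambda>m. p m + c * q m) = (\<lambda>m. pder i p m + c * pder i q m)"
  unfolding pder_def by (simp add: algebra_simps)

lemma dder_bin_poly: "dder u (\<lambda>m. p m + c * q m) = (\<lambda>m. dder u p m + c * dder u q m)"
  unfolding dder_def pder_bin by (simp add: sum.distrib sum_distrib_left algebra_simps)

lemma pder_sum: "pder i (\<lambda>m. \<Sum>j\<in>I. a j * p j m) = (\<lambda>m. \<Sum>j\<in>I. a j * pder i (p j) m)"
  unfolding pder_def by (simp add: sum_distrib_left algebra_simps)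

lemma dder_sum_poly: "dder u (\<lambda>m. \<Sum>j\<in>I. a j * p j m) = (\<lambda>m. \<Sum>j\<in>I. a j * dder u (p j) m)"
  unfolding dder_def pder_sum by (simp add: sum_distrib_left algebra_simps sum.swap[of _ _ I])

lemma vecs_sum:
  fixes x :: "'j \<Rightarrow> 'i \<Rightarrow> 'k::field"
  assumes "finite I" "\<forall>j\<in>I. x j \<in> vecs"
  shows "(\<lambda>t. \<Sum>j\<in>I. a j * x j t) \<in> vecs"
proof -
  have "\<And>t. (\<forall>j\<in>I. x j t = 0) \<Longrightarrow> (\<Sum>j\<in>I. a j * x j t) = 0" by simp
  then have "{t. (\<Sum>j\<in>I. a j * x j t) \<noteq> 0} \<subseteq> (\<Union>j\<in>I. {t. x j t \<noteq> 0})"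
    by blast
  moreover have "finite (\<Union>j\<in>I. {t. x j t \<noteq> 0})" using assms unfolding vecs_def by auto
  ultimately show ?thesis unfolding vecs_def by (auto intro: finite_subset)
qed

lemma dder_sum_vec:
  fixes x :: "'j \<Rightarrow> 'i \<Rightarrow> 'k::field"
  assumes "finite I" "\<forall>j\<in>I. x j \<in> vecs"
  shows "dder (\<lambda>t. \<Sum>j\<in>I. a j * x j t) p = (\<lambda>m. \<Sum>j\<in>I. a j * dder (x j) p m)"
proof
  fix m
  let ?F = "\<Union>j\<in>I. {t. x j t \<noteq> 0}"
  have fF: "finite ?F" using assms unfolding vecs_def by auto
  have "dder (\<lambda>t. \<Sum>j\<in>I. a j * x j t) p m = (\<Sum>t\<in>?F. (\<Sum>j\<in>I. a j * x j t) * pder t p m)"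
    by (rule dder_eq_sum[OF fF]) (auto intro: ccontr simp: sum.neutral)
  also have "\<dots> = (\<Sum>j\<in>I. a j * (\<Sum>t\<in>?F. x j t * pder t p m))"
    by (simp add: sum_distrib_left sum_distrib_right sum.swap[of _ I] algebra_simps)
  also have "\<dots> = (\<Sum>j\<in>I. a j * dder (x j) p m)"
    by (rule sum.cong[OF refl]) (subst dder_eq_sum[OF fF], auto)
  finally show "dder (\<lambda>t. \<Sum>j\<in>I. a j * x j t) p m = (\<Sum>j\<in>I. a j * dder (x j) p m)" .
qed

lemma tri_bin1: "x \<in> vecs \<Longrightarrow> y \<in> vecs \<Longrightarrow> tri f (\<lambda>i. x i + c * y i) p q = tri f x p q + c * tri f y p q"
  unfolding tri_def by (simp add: dder_bin_vec add_divide_distrib)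
lemma tri_bin2: "x \<in> vecs \<Longrightarrow> y \<in> vecs \<Longrightarrow> tri f p (\<lambda>i. x i + c * y i) q = tri f p x q + c * tri f p y q"
  unfolding tri_def by (simp add: dder_bin_vec dder_bin_poly add_divide_distrib)
lemma tri_bin3: "x \<in> vecs \<Longrightarrow> y \<in> vecs \<Longrightarrow> tri f p q (\<lambda>i. x i + c * y i) = tri f p q x + c * tri f p q y"
  unfolding tri_def by (simp add: dder_bin_vec dder_bin_poly add_divide_distrib)

lemma tri_sum1: "finite I \<Longrightarrow> \<forall>j\<in>I. x j \<in> vecs \<Longrightarrow>
   tri f (\<lambda>t. \<Sum>j\<in>I. a j * x j t) p q = (\<Sum>j\<in>I. a j * tri f (x j) p q)"
  unfolding tri_def by (simp add: dder_sum_vec sum_divide_distrib)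
lemma tri_sum2: "finite I \<Longrightarrow> \<forall>j\<in>I. x j \<in> vecs \<Longrightarrow>
   tri f p (\<lambda>t. \<Sum>j\<in>I. a j * x j t) q = (\<Sum>j\<in>I. a j * tri f p (x j) q)"
  unfolding tri_def by (simp add: dder_sum_vec dder_sum_poly sum_divide_distrib)
lemma tri_sum3: "finite I \<Longrightarrow> \<forall>j\<in>I. x j \<in> vecs \<Longrightarrow>
   tri f p q (\<lambda>t. \<Sum>j\<in>I. a j * x j t) = (\<Sum>j\<in>I. a j * tri f p q (x j))"
  unfolding tri_def by (simp add: dder_sum_vec dder_sum_poly sum_divide_distrib)

lemma P2fin_iff: "h \<in> P2fin \<longleftrightarrow> homog 2 h \<and> (\<exists>s. strength_rep 2 h s)"
  unfolding P2fin_def strength_def by auto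

lemma P2fin_zero: "(\<lambda>m. 0::'k::comm_ring_1) \<in> (P2fin :: ('i multiset \<Rightarrow> 'k) set)"
proof -
  have "strength_rep 2 (\<lambda>m::'i multiset. 0::'k) 0"
    unfolding strength_rep_def
    by (rule exI[of _ "\<lambda>_ _. 0"], rule exI[of _ "\<lambda>_ _. 0"], rule exI[of _ "\<lambda>_. 1"], rule exI[of _ "\<lambda>_. 1"]) simp
  moreover have "homog 2 (\<lambda>m::'i multiset. 0::'k)" unfolding homog_def by simp
  ultimately show ?thesis unfolding P2fin_iff by blast
qed

lemma P2fin_scale:
  fixes h :: "'i multiset \<Rightarrow> 'k::field"
  assumes "h \<in> P2fin" shows "(\<lambda>m. a * h m) \<in> P2fin"
proof -
  from assms obtain s where hh: "homog 2 h" and r: "strength_rep 2 h s" unfolding P2fin_iff by auto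
  from r obtain A B :: "nat \<Rightarrow> 'i multiset \<Rightarrow> 'k" and da db where
    c: "\<forall>j<s. 0 < da j \<and> da j < 2 \<and> 0 < db j \<and> db j < 2 \<and> homog (da j) (A j) \<and> homog (db j) (B j)"
    and e: "h = (\<lambda>m. \<Sum>j<s. pmul (A j) (B j) m)"
    unfolding strength_rep_def by blast
  let ?A = "\<lambda>j m. a * A j m"
  have "\<forall>j<s. homog (da j) (?A j)" using c unfolding homog_def by auto
  moreover have "(\<lambda>m. a * h m) = (\<lambda>m. \<Sum>j<s. pmul (?A j) (B j) m)"
    unfolding e pmul_def by (simp add: sum_distrib_left mult.assoc)
  ultimately have "strength_rep 2 (\<lambda>m. a * h m) s"
    unfolding strength_rep_def
    by (rule_tac exI[of _ ?A], rule_tac exI[of _ B], rule_tac exI[of _ da], rule_tac exI[of _ db]) (use c in auto)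
  moreover have "homog 2 (\<lambda>m. a * h m)" using hh unfolding homog_def by auto
  ultimately show ?thesis unfolding P2fin_iff by blast
qed

definition goodl :: "('i multiset \<Rightarrow> 'k::field) \<Rightarrow> ('i \<Rightarrow> 'k) list \<Rightarrow> ('i \<Rightarrow> 'k) \<Rightarrow> bool" where
  "goodl f Ls x \<longleftrightarrow> (\<forall>c::nat\<Rightarrow>'k. (\<lambda>m. dder x f m - (\<Sum>j<length Ls. c j * dder (Ls!j) f m)) \<notin> P2fin)"

lemma regroup_set:
  fixes c :: "nat \<Rightarrow> 'k::comm_ring_1"
  shows "\<exists>C. \<forall>g. (\<Sum>j<length L. c j * g (L!j)) = (\<Sum>u\<in>set L. C u * g u)"
proof -
  let ?C = "\<lambda>u. \<Sum>j\<in>{j. j \<in> {..<length L} \<and> L!j = u}. c j"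
  have "\<forall>g. (\<Sum>j<length L. c j * g (L!j)) = (\<Sum>u\<in>set L. ?C u * g u)"
  proof
    fix g :: "'a \<Rightarrow> 'k"
    have "(\<Sum>u\<in>set L. ?C u * g u) = (\<Sum>u\<in>set L. \<Sum>j\<in>{j. j \<in> {..<length L} \<and> L!j = u}. c j * g (L!j))"
      by (auto simp: sum_distrib_right intro!: sum.cong)
    also have "\<dots> = (\<Sum>j<length L. c j * g (L!j))"
      by (rule sum.group) (auto)
    finally show "(\<Sum>j<length L. c j * g (L!j)) = (\<Sum>u\<in>set L. ?C u * g u)" by simp
  qed
  then show ?thesis by (rule exI[where x="?C"])
qed

lemma regroup_sub:
  fixes c :: "nat \<Rightarrow> 'k::comm_ring_1"
  assumes "set L \<subseteq> set E"
  shows "\<exists>c'. \<forall>g. (\<Sum>i<length L. c i * g (L!i)) = (\<Sum>j<length E. c' j * g (E!j))"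
proof -
  have "\<forall>i. \<exists>j. i < length L \<longrightarrow> j < length E \<and> E!j = L!i"
  proof
    fix i
    show "\<exists>j. i < length L \<longrightarrow> j < length E \<and> E!j = L!i"
    proof (cases "i < length L")
      case True
      then have "L!i \<in> set E" using assms nth_mem by blast
      then obtain j where "j < length E" "E!j = L!i" by (auto simp: in_set_conv_nth)
      then show ?thesis by blast
    qed auto
  qed
  then obtain idx where idx: "\<And>i. i < length L \<Longrightarrow> idx i < length E \<and> E!(idx i) = L!i" by metis
  let ?c = "\<lambda>j. \<Sum>i\<in>{i. i \<in> {..<length L} \<and> idx i = j}. c i"
  have "\<forall>g. (\<Sum>i<length L. c i * g (L!i)) = (\<Sum>j<length E. ?c j * g (E!j))"
  proof
    fix g :: "'a \<Rightarrow> 'k"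
    have "(\<Sum>j<length E. ?c j * g (E!j)) = (\<Sum>j<length E. \<Sum>i\<in>{i. i \<in> {..<length L} \<and> idx i = j}. c i * g (E!(idx i)))"
      by (auto simp: sum_distrib_right intro!: sum.cong)
    also have "\<dots> = (\<Sum>i<length L. c i * g (E!(idx i)))"
      by (rule sum.group) (use idx in auto)
    also have "\<dots> = (\<Sum>i<length L. c i * g (L!i))"
      using idx by (auto intro!: sum.cong)
    finally show "(\<Sum>i<length L. c i * g (L!i)) = (\<Sum>j<length E. ?c j * g (E!j))" by simp
  qed
  then show ?thesis by (rule exI[where x="?c"])
qed

lemma goodl_sub:
  fixes f :: "'i multiset \<Rightarrow> 'k::field"
  assumes "goodl f E v" "set L \<subseteq> set E"
  shows "goodl f L v"
  unfolding goodl_def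
proof
  fix c :: "nat \<Rightarrow> 'k"
  obtain c' where c': "\<forall>g. (\<Sum>i<length L. c i * g (L!i)) = (\<Sum>j<length E. c' j * g (E!j))"
    using regroup_sub[OF assms(2), of c] by blast
  have "(\<lambda>m. dder v f m - (\<Sum>j<length L. c j * dder (L!j) f m)) =
        (\<lambda>m. dder v f m - (\<Sum>j<length E. c' j * dder (E!j) f m))"
  proof
    fix m show "dder v f m - (\<Sum>j<length L. c j * dder (L!j) f m) = dder v f m - (\<Sum>j<length E. c' j * dder (E!j) f m)"
      using c'[rule_format, of "\<lambda>u. dder u f m"] by simp
  qed
  moreover have "(\<lambda>m. dder v f m - (\<Sum>j<length E. c' j * dder (E!j) f m)) \<notin> P2fin"
    using spec[OF assms(1)[unfolded goodl_def], of c'] by simp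
  ultimately show "(\<lambda>m. dder v f m - (\<Sum>j<length L. c j * dder (L!j) f m)) \<notin> P2fin"
    by (simp only: not_False_eq_True)
qed

definition lin_fun :: "(('i \<Rightarrow> 'k::field) \<Rightarrow> 'k) \<Rightarrow> bool" where
  "lin_fun \<phi> \<longleftrightarrow> (\<forall>x\<in>vecs. \<forall>y\<in>vecs. \<forall>c. \<phi> (\<lambda>i. x i + c * y i) = \<phi> x + c * \<phi> y)"

lemma kernel:
  fixes f :: "'i multiset \<Rightarrow> 'k::field"
  assumes rrk: "rrk_infinite f"
  shows "set Ls \<subseteq> vecs \<Longrightarrow> (\<forall>\<phi>\<in>set \<phi>s. lin_fun \<phi>) \<Longrightarrow>
    \<exists>x\<in>vecs. (\<forall>\<phi>\<in>set \<phi>s. \<phi> x = 0) \<and> goodl f Ls x"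
proof (induction \<phi>s arbitrary: Ls)
  case Nil
  from rrk have "\<not> (\<forall>v\<in>vecs. \<exists>c :: ('i \<Rightarrow> 'k) \<Rightarrow> 'k.
             (\<lambda>m. dder v f m - (\<Sum>u\<in>set Ls. c u * dder u f m)) \<in> P2fin)"
    unfolding rrk_infinite_def using Nil.prems(1) finite_set[of Ls] by blast
  then obtain v where v: "v \<in> vecs" and nv: "\<forall>c :: ('i \<Rightarrow> 'k) \<Rightarrow> 'k.
             (\<lambda>m. dder v f m - (\<Sum>u\<in>set Ls. c u * dder u f m)) \<notin> P2fin" by blast
  have "goodl f Ls v" unfolding goodl_def
  proof
    fix c :: "nat \<Rightarrow> 'k"
    obtain C where C: "\<forall>g. (\<Sum>j<length Ls. c j * g (Ls!j)) = (\<Sum>u\<in>set Ls. C u * g u)"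
      using regroup_set[where L=Ls and c=c] by blast
    have "(\<lambda>m. dder v f m - (\<Sum>j<length Ls. c j * dder (Ls!j) f m)) =
          (\<lambda>m. dder v f m - (\<Sum>u\<in>set Ls. C u * dder u f m))"
    proof
      fix m show "dder v f m - (\<Sum>j<length Ls. c j * dder (Ls!j) f m) = dder v f m - (\<Sum>u\<in>set Ls. C u * dder u f m)"
        using C[rule_format, of "\<lambda>u. dder u f m"] by simp
    qed
    moreover have "(\<lambda>m. dder v f m - (\<Sum>u\<in>set Ls. C u * dder u f m)) \<notin> P2fin"
      using spec[OF nv, of C] by simp
    ultimately show "(\<lambda>m. dder v f m - (\<Sum>j<length Ls. c j * dder (Ls!j) f m)) \<notin> P2fin"
      by (simp only: not_False_eq_True)
  qed
  then show ?case using v by auto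
next
  case (Cons \<phi> \<phi>s)
  from Cons.IH[OF Cons.prems(1)] Cons.prems(2) obtain x1 where
    x1: "x1 \<in> vecs" "\<forall>\<psi>\<in>set \<phi>s. \<psi> x1 = 0" "goodl f Ls x1" by auto
  show ?case
  proof (cases "\<phi> x1 = 0")
    case True then show ?thesis using x1 by auto
  next
    case False
    have "set (Ls @ [x1]) \<subseteq> vecs" using Cons.prems(1) x1 by auto
    from Cons.IH[OF this] Cons.prems(2) obtain x2 where
      x2: "x2 \<in> vecs" "\<forall>\<psi>\<in>set \<phi>s. \<psi> x2 = 0" "goodl f (Ls @ [x1]) x2" by auto
    define t where "t = \<phi> x2 / \<phi> x1"
    define x where "x = (\<lambda>i. x2 i + (- t) * x1 i)"
    have xv: "x \<in> vecs" unfolding x_def using x1 x2 by (intro vecs_bin)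
    have lin: "\<psi> x = \<psi> x2 + (- t) * \<psi> x1" if "\<psi> \<in> set (\<phi> # \<phi>s)" for \<psi>
    proof -
      have "lin_fun \<psi>" using Cons.prems(2) that by blast
      then have "\<forall>c. \<psi> (\<lambda>i. x2 i + c * x1 i) = \<psi> x2 + c * \<psi> x1"
        using x2(1) x1(1) unfolding lin_fun_def by blast
      then show ?thesis unfolding x_def by blast
    qed
    have k0: "\<phi> x = 0" using lin[of \<phi>] False unfolding t_def by simp
    have k1: "\<forall>\<psi>\<in>set \<phi>s. \<psi> x = 0"
    proof
      fix \<psi> assume "\<psi> \<in> set \<phi>s"
      then have "\<psi> x1 = 0" "\<psi> x2 = 0" "\<psi> x = \<psi> x2 + (- t) * \<psi> x1" using lin[of \<psi>] x1(2) x2(2) by auto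
      then show "\<psi> x = 0" by simp
    qed
    have "goodl f Ls x" unfolding goodl_def
    proof
      fix c :: "nat \<Rightarrow> 'k"
      let ?c = "c(length Ls := t)"
      have dx: "dder x f = (\<lambda>m. dder x2 f m + (- t) * dder x1 f m)"
        unfolding x_def using x2(1) x1(1) by (rule dder_bin_vec)
      have "(\<lambda>m. dder x f m - (\<Sum>j<length Ls. c j * dder (Ls!j) f m)) =
            (\<lambda>m. dder x2 f m - (\<Sum>j<length (Ls @ [x1]). ?c j * dder ((Ls @ [x1])!j) f m))"
      proof
        fix m
        have "(\<Sum>j<length (Ls @ [x1]). ?c j * dder ((Ls @ [x1])!j) f m) =
              (\<Sum>j<length Ls. c j * dder (Ls!j) f m) + t * dder x1 f m"
        proof -
          have "(\<Sum>j<length (Ls @ [x1]). ?c j * dder ((Ls @ [x1])!j) f m) =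
              (\<Sum>j<length Ls. ?c j * dder ((Ls @ [x1])!j) f m) + ?c (length Ls) * dder ((Ls @ [x1])!(length Ls)) f m"
            by (simp only: length_append_singleton sum.lessThan_Suc)
          also have "(\<Sum>j<length Ls. ?c j * dder ((Ls @ [x1])!j) f m) = (\<Sum>j<length Ls. c j * dder (Ls!j) f m)"
            by (rule sum.cong) (auto simp: nth_append)
          moreover have "?c (length Ls) * dder ((Ls @ [x1])!(length Ls)) f m = t * dder x1 f m" by simp
          ultimately show ?thesis by simp
        qed
        note h = this
        have dxm: "dder x f m = dder x2 f m + (- t) * dder x1 f m" using dx by (rule fun_cong)
        show "dder x f m - (\<Sum>j<length Ls. c j * dder (Ls!j) f m) =
           dder x2 f m - (\<Sum>j<length (Ls @ [x1]). ?c j * dder ((Ls @ [x1])!j) f m)"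
          unfolding h dxm by (simp add: algebra_simps)
      qed
      moreover have "(\<lambda>m. dder x2 f m - (\<Sum>j<length (Ls @ [x1]). ?c j * dder ((Ls @ [x1])!j) f m)) \<notin> P2fin"
        using spec[OF x2(3)[unfolded goodl_def], of ?c] by simp
      ultimately show "(\<lambda>m. dder x f m - (\<Sum>j<length Ls. c j * dder (Ls!j) f m)) \<notin> P2fin"
        by (simp only: not_False_eq_True)
    qed
    then show ?thesis using xv k0 k1 by (intro bexI[of _ x] conjI) auto
  qed
qed

lemma linsys:
  fixes cs :: "(nat \<Rightarrow> 'k::field) list"
  shows "finite I \<Longrightarrow> length cs < card I \<Longrightarrow> \<exists>b. (\<exists>i\<in>I. b i \<noteq> 0) \<and> (\<forall>c\<in>set cs. (\<Sum>i\<in>I. c i * b i) = 0)"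
proof (induction cs arbitrary: I)
  case Nil
  then obtain i where "i \<in> I" by fastforce
  then show ?case by (intro exI[of _ "\<lambda>_. 1"]) auto
next
  case (Cons c cs)
  have ext0: "(\<Sum>i\<in>I. d i * (b(i0 := 0)) i) = (\<Sum>i\<in>I - {i0}. d i * b i)"
    if "i0 \<in> I" for b :: "nat \<Rightarrow> 'k" and i0 and d :: "nat \<Rightarrow> 'k"
  proof -
    have "(\<Sum>i\<in>I. d i * (b(i0 := 0)) i) = d i0 * 0 + (\<Sum>i\<in>I - {i0}. d i * (b(i0 := 0)) i)"
      using Cons.prems(1) that by (simp add: sum.remove)
    also have "\<dots> = (\<Sum>i\<in>I - {i0}. d i * b i)" by (auto intro!: sum.cong)
    finally show ?thesis .
  qed
  from Cons.prems have "I \<noteq> {}" by auto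
  then obtain i0 where i0: "i0 \<in> I" by auto
  have c1: "length cs < card (I - {i0})" using Cons.prems i0 by auto
  from Cons.IH[OF _ c1] Cons.prems(1) obtain b1 i1 where
    b1: "i1 \<in> I - {i0}" "b1 i1 \<noteq> 0" "\<forall>c\<in>set cs. (\<Sum>i\<in>I - {i0}. c i * b1 i) = 0" by auto
  let ?b1 = "b1(i0 := 0)"
  have b1': "\<forall>c\<in>set cs. (\<Sum>i\<in>I. c i * ?b1 i) = 0" using b1(3) ext0[OF i0] by simp
  show ?case
  proof (cases "(\<Sum>i\<in>I. c i * ?b1 i) = 0")
    case True
    then show ?thesis using b1 b1' by (intro exI[of _ ?b1]) auto
  next
    case False
    have i1: "i1 \<in> I" using b1 by auto
    have c2: "length cs < card (I - {i1})" using Cons.prems i1 by auto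
    from Cons.IH[OF _ c2] Cons.prems(1) obtain b2 i2 where
      b2: "i2 \<in> I - {i1}" "b2 i2 \<noteq> 0" "\<forall>c\<in>set cs. (\<Sum>i\<in>I - {i1}. c i * b2 i) = 0" by auto
    let ?b2 = "b2(i1 := 0)"
    have b2': "\<forall>c\<in>set cs. (\<Sum>i\<in>I. c i * ?b2 i) = 0" using b2(3) ext0[OF i1] by simp
    define t where "t = (\<Sum>i\<in>I. c i * ?b2 i) / (\<Sum>i\<in>I. c i * ?b1 i)"
    define b where "b = (\<lambda>i. ?b2 i - t * ?b1 i)"
    have lin: "\<And>d. (\<Sum>i\<in>I. d i * b i) = (\<Sum>i\<in>I. d i * ?b2 i) - t * (\<Sum>i\<in>I. d i * ?b1 i)"
      unfolding b_def by (simp add: algebra_simps sum_subtractf sum_distrib_left)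
    have "\<forall>d\<in>set (c # cs). (\<Sum>i\<in>I. d i * b i) = 0"
      using lin b1' b2' False unfolding t_def by auto
    moreover have "\<exists>i\<in>I. b i \<noteq> 0"
    proof (cases "t = 0")
      case True
      then show ?thesis using b2 unfolding b_def by (intro bexI[of _ i2]) auto
    next
      case False
      then show ?thesis using b1 i1 unfolding b_def by (intro bexI[of _ i1]) auto
    qed
    ultimately show ?thesis by blast
  qed
qed

definition slotfun :: "('i multiset \<Rightarrow> 'k::field) \<Rightarrow> nat \<Rightarrow> ('i \<Rightarrow> 'k) \<Rightarrow> ('i \<Rightarrow> 'k) \<Rightarrow> ('i \<Rightarrow> 'k) \<Rightarrow> 'k" where
  "slotfun f k p q = (\<lambda>x. if k = 0 then tri f x p q else if k = 1 then tri f p x q else tri f p q x)"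

lemma slot_lin: "lin_fun (slotfun f k p q)"
  unfolding lin_fun_def slotfun_def by (auto simp: tri_bin1 tri_bin2 tri_bin3)

lemma build_us:
  fixes f :: "'i multiset \<Rightarrow> 'k::field"
  assumes rrk: "rrk_infinite f" and Ev: "set E \<subseteq> vecs"
  shows "\<exists>us. length us = M \<and> set us \<subseteq> vecs \<and>
    (\<forall>k<M. goodl f (E @ take k us) (us!k) \<and>
       (\<forall>p\<in>set (E @ take k us). \<forall>q\<in>set (E @ take k us).
          tri f (us!k) p q = 0 \<and> tri f p (us!k) q = 0 \<and> tri f p q (us!k) = 0))"
proof (induction M)
  case 0 then show ?case by auto
next
  case (Suc M)
  then obtain us where us: "length us = M" "set us \<subseteq> vecs"
    "\<forall>k<M. goodl f (E @ take k us) (us!k) \<and>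
       (\<forall>p\<in>set (E @ take k us). \<forall>q\<in>set (E @ take k us).
          tri f (us!k) p q = 0 \<and> tri f p (us!k) q = 0 \<and> tri f p q (us!k) = 0)" by blast
  let ?P = "E @ us"
  let ?\<phi>s = "map (\<lambda>(k,p,q). slotfun f k p q) (List.product [0,1,2] (List.product ?P ?P))"
  have lf: "\<forall>\<phi>\<in>set ?\<phi>s. lin_fun \<phi>"
    using slot_lin by auto
  have Pv: "set ?P \<subseteq> vecs" using Ev us by auto
  from kernel[OF rrk Pv lf] obtain x where
    x: "x \<in> vecs" "\<forall>\<phi>\<in>set ?\<phi>s. \<phi> x = 0" "goodl f ?P x" by blast
  have mem: "slotfun f k p q \<in> set ?\<phi>s" if "k \<in> {0,1,2}" "p \<in> set ?P" "q \<in> set ?P" for k p q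
    unfolding set_map by (rule image_eqI[where x="(k,p,q)"]) (use that in auto)
  have xt: "\<forall>p\<in>set ?P. \<forall>q\<in>set ?P. tri f x p q = 0 \<and> tri f p x q = 0 \<and> tri f p q x = 0"
  proof (intro ballI)
    fix p q assume pq: "p \<in> set ?P" "q \<in> set ?P"
    have "slotfun f 0 p q x = 0" "slotfun f 1 p q x = 0" "slotfun f 2 p q x = 0"
      using x(2) mem[OF _ pq] by auto
    then show "tri f x p q = 0 \<and> tri f p x q = 0 \<and> tri f p q x = 0"
      unfolding slotfun_def by simp
  qed
  let ?us = "us @ [x]"
  have "\<forall>k<Suc M. goodl f (E @ take k ?us) (?us!k) \<and>
       (\<forall>p\<in>set (E @ take k ?us). \<forall>q\<in>set (E @ take k ?us).
          tri f (?us!k) p q = 0 \<and> tri f p (?us!k) q = 0 \<and> tri f p q (?us!k) = 0)"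
  proof (intro allI impI)
    fix k assume k: "k < Suc M"
    show "goodl f (E @ take k ?us) (?us!k) \<and>
       (\<forall>p\<in>set (E @ take k ?us). \<forall>q\<in>set (E @ take k ?us).
          tri f (?us!k) p q = 0 \<and> tri f p (?us!k) q = 0 \<and> tri f p q (?us!k) = 0)"
    proof (cases "k < M")
      case True
      then have "take k ?us = take k us" "?us!k = us!k" using us(1) by (auto simp: nth_append)
      then show ?thesis using us(3) True by simp
    next
      case False
      then have "k = M" using k by simp
      then have "take k ?us = us" "?us!k = x" using us(1) by auto
      then show ?thesis using x(3) xt by simp
    qed
  qed
  then show ?case using us x by (intro exI[of _ ?us]) auto
qed

lemma good_comb:
  fixes f :: "'i multiset \<Rightarrow> 'k::field"
  assumes usv: "set us \<subseteq> vecs" and gd: "\<forall>k<length us. goodl f (E @ take k us) (us!k)"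
  shows "n \<le> length us \<Longrightarrow> (\<exists>i<n. a i \<noteq> 0) \<Longrightarrow> goodl f E (\<lambda>t. \<Sum>i<n. a i * (us!i) t)"
proof (induction n)
  case 0 then show ?case by simp
next
  case (Suc n)
  show ?case
  proof (cases "a n = 0")
    case True
    then have "(\<lambda>t. \<Sum>i<Suc n. a i * (us!i) t) = (\<lambda>t. \<Sum>i<n. a i * (us!i) t)" by simp
    moreover have "\<exists>i<n. a i \<noteq> 0" using Suc.prems(2) True less_Suc_eq by auto
    ultimately show ?thesis using Suc by simp
  next
    case False
    have nl: "n < length us" using Suc.prems by simp
    have vv: "\<forall>j\<in>{..<Suc n}. us!j \<in> vecs"
    proof
      fix j assume "j \<in> {..<Suc n}"
      then have "j < length us" using Suc.prems(1) by simp
      then show "us!j \<in> vecs" using usv nth_mem by blast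
    qed
    have dv: "dder (\<lambda>t. \<Sum>i<Suc n. a i * (us!i) t) f = (\<lambda>m. \<Sum>i<Suc n. a i * dder (us!i) f m)"
      using dder_sum_vec[where x="\<lambda>i. us!i", OF _ vv] by simp
    show ?thesis unfolding goodl_def
    proof
      fix c :: "nat \<Rightarrow> 'k"
      let ?L = "E @ take n us"
      define c' where "c' = (\<lambda>j. if j < length E then c j / a n else - a (j - length E) / a n)"
      have eq: "(\<lambda>m. (1 / a n) * (dder (\<lambda>t. \<Sum>i<Suc n. a i * (us!i) t) f m - (\<Sum>j<length E. c j * dder (E!j) f m)))
         = (\<lambda>m. dder (us!n) f m - (\<Sum>j<length ?L. c' j * dder (?L!j) f m))"
      proof
        fix m
        have s1: "(\<Sum>j<length ?L. c' j * dder (?L!j) f m) =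
            (\<Sum>j<length E. (c j / a n) * dder (E!j) f m) + (\<Sum>i<n. (- a i / a n) * dder (us!i) f m)"
          unfolding list_sum_append[of "\<lambda>j u. c' j * dder u f m"] using nl by (simp add: c'_def)
        show "(1 / a n) * (dder (\<lambda>t. \<Sum>i<Suc n. a i * (us!i) t) f m - (\<Sum>j<length E. c j * dder (E!j) f m))
          = dder (us!n) f m - (\<Sum>j<length ?L. c' j * dder (?L!j) f m)"
          unfolding s1 dv using False
          by (simp add: sum_distrib_left sum_divide_distrib field_simps sum_negf)
      qed
      show "(\<lambda>m. dder (\<lambda>t. \<Sum>i<Suc n. a i * (us!i) t) f m - (\<Sum>j<length E. c j * dder (E!j) f m)) \<notin> P2fin"
      proof
        assume "(\<lambda>m. dder (\<lambda>t. \<Sum>i<Suc n. a i * (us!i) t) f m - (\<Sum>j<length E. c j * dder (E!j) f m)) \<in> P2fin"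
        from P2fin_scale[OF this, of "1 / a n"] have "(\<lambda>m. dder (us!n) f m - (\<Sum>j<length ?L. c' j * dder (?L!j) f m)) \<in> P2fin"
          unfolding eq .
        then show False using gd nl unfolding goodl_def by blast
      qed
    qed
  qed
qed

lemma qli_distinct:
  fixes f :: "'i multiset \<Rightarrow> 'k::field"
  assumes q: "qbar_lin_indep f L" and jk: "j < length L" "k < length L" "j \<noteq> k"
  shows "(\<lambda>m. dder (L!j) f m - dder (L!k) f m) \<notin> P2fin"
proof
  assume H: "(\<lambda>m. dder (L!j) f m - dder (L!k) f m) \<in> P2fin"
  define c where "c = (\<lambda>i. if i = j then 1 else if i = k then -1 else (0::'k))"
  have eq: "(\<lambda>m. \<Sum>i<length L. c i * dder (L!i) f m) = (\<lambda>m. dder (L!j) f m - dder (L!k) f m)"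
  proof
    fix m
    have "(\<Sum>i<length L. c i * dder (L!i) f m) =
          (\<Sum>i<length L. (if i = j then dder (L!j) f m else 0) + (if i = k then - dder (L!k) f m else 0))"
      by (rule sum.cong) (use jk in \<open>auto simp: c_def\<close>)
    also have "\<dots> = dder (L!j) f m - dder (L!k) f m" using jk by (simp add: sum.distrib)
    finally show "(\<Sum>i<length L. c i * dder (L!i) f m) = dder (L!j) f m - dder (L!k) f m" .
  qed
  have "(\<lambda>m. \<Sum>i<length L. c i * dder (L!i) f m) \<in> P2fin" unfolding eq by (rule H)
  then have "c j = 0" using spec[OF q[unfolded qbar_lin_indep_def], of c] jk by simp
  then show False by (simp add: c_def)
qed

lemma alg1: "(a::'k::field) \<noteq> 0 \<Longrightarrow> (1 / a) * (X + a * D + Y) = D - (- X / a + - Y / a)"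
  by (simp add: field_simps)

lemma qli_insert:
  fixes f :: "'i multiset \<Rightarrow> 'k::field"
  assumes q: "qbar_lin_indep f (L1 @ L2)" and g: "goodl f (L1 @ L2) v"
  shows "qbar_lin_indep f (L1 @ [v] @ L2)"
  unfolding qbar_lin_indep_def
proof (rule allI, rule impI)
  fix c :: "nat \<Rightarrow> 'k"
  assume H: "(\<lambda>m. \<Sum>j<length (L1 @ [v] @ L2). c j * dder ((L1 @ [v] @ L2)!j) f m) \<in> P2fin"
  let ?p = "length L1"
  have split: "(\<Sum>j<length (L1 @ [v] @ L2). c j * dder ((L1 @ [v] @ L2)!j) f m) =
     (\<Sum>i<?p. c i * dder (L1!i) f m) + c ?p * dder v f m + (\<Sum>i<length L2. c (?p + Suc i) * dder (L2!i) f m)" for m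
  proof -
    have "(\<Sum>j<length (L1 @ ([v] @ L2)). c j * dder ((L1 @ ([v] @ L2))!j) f m) =
      (\<Sum>i<?p. c i * dder (L1!i) f m) + (\<Sum>i<length ([v] @ L2). c (?p + i) * dder (([v] @ L2)!i) f m)"
      by (rule list_sum_append[where h = "\<lambda>j u. c j * dder u f m"])
    also have "(\<Sum>i<length ([v] @ L2). c (?p + i) * dder (([v] @ L2)!i) f m) =
       c ?p * dder v f m + (\<Sum>i<length L2. c (?p + Suc i) * dder (L2!i) f m)"
      unfolding append_Cons append_Nil length_Cons sum.lessThan_Suc_shift nth_Cons_0 nth_Cons_Suc by simp
    finally show ?thesis by (simp add: add.assoc)
  qed
  have split2: "(\<Sum>j<length (L1 @ L2). d j * dder ((L1 @ L2)!j) f m) =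
     (\<Sum>i<?p. d i * dder (L1!i) f m) + (\<Sum>i<length L2. d (?p + i) * dder (L2!i) f m)" for d :: "nat \<Rightarrow> 'k" and m
    by (rule list_sum_append[where h = "\<lambda>j u. d j * dder u f m"])
  show "\<forall>j<length (L1 @ [v] @ L2). c j = 0"
  proof (cases "c ?p = 0")
    case False
    define d where "d = (\<lambda>j. if j < ?p then - c j / c ?p else - c (Suc j) / c ?p)"
    have eq: "(\<lambda>m. (1 / c ?p) * (\<Sum>j<length (L1 @ [v] @ L2). c j * dder ((L1 @ [v] @ L2)!j) f m)) =
        (\<lambda>m. dder v f m - (\<Sum>j<length (L1 @ L2). d j * dder ((L1 @ L2)!j) f m))"
    proof
      fix m
      have s1: "(\<Sum>i<?p. d i * dder (L1!i) f m) = - (\<Sum>i<?p. c i * dder (L1!i) f m) / c ?p"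
      proof -
        have "(\<Sum>i<?p. d i * dder (L1!i) f m) = (\<Sum>i<?p. - (c i * dder (L1!i) f m) / c ?p)"
          by (rule sum.cong) (auto simp: d_def)
        also have "\<dots> = - (\<Sum>i<?p. c i * dder (L1!i) f m) / c ?p"
          by (simp add: sum_divide_distrib sum_negf)
        finally show ?thesis .
      qed
      have s2: "(\<Sum>i<length L2. d (?p + i) * dder (L2!i) f m) = - (\<Sum>i<length L2. c (?p + Suc i) * dder (L2!i) f m) / c ?p"
      proof -
        have "(\<Sum>i<length L2. d (?p + i) * dder (L2!i) f m) = (\<Sum>i<length L2. - (c (?p + Suc i) * dder (L2!i) f m) / c ?p)"
          by (rule sum.cong) (auto simp: d_def)
        also have "\<dots> = - (\<Sum>i<length L2. c (?p + Suc i) * dder (L2!i) f m) / c ?p"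
          by (simp add: sum_divide_distrib sum_negf)
        finally show ?thesis .
      qed
      show "(1 / c ?p) * (\<Sum>j<length (L1 @ [v] @ L2). c j * dder ((L1 @ [v] @ L2)!j) f m) =
          dder v f m - (\<Sum>j<length (L1 @ L2). d j * dder ((L1 @ L2)!j) f m)"
        unfolding split split2 s1 s2 using False by (rule alg1)
    qed
    have "(\<lambda>m. dder v f m - (\<Sum>j<length (L1 @ L2). d j * dder ((L1 @ L2)!j) f m)) \<in> P2fin"
      unfolding eq[symmetric] by (rule P2fin_scale[OF H])
    moreover have "(\<lambda>m. dder v f m - (\<Sum>j<length (L1 @ L2). d j * dder ((L1 @ L2)!j) f m)) \<notin> P2fin"
      using spec[OF g[unfolded goodl_def], of d] by simp
    ultimately show ?thesis by contradiction
  next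
    case True
    define d where "d = (\<lambda>j. if j < ?p then c j else c (Suc j))"
    have eq: "(\<lambda>m. \<Sum>j<length (L1 @ L2). d j * dder ((L1 @ L2)!j) f m) =
        (\<lambda>m. \<Sum>j<length (L1 @ [v] @ L2). c j * dder ((L1 @ [v] @ L2)!j) f m)"
    proof
      fix m
      have s1: "(\<Sum>i<?p. d i * dder (L1!i) f m) = (\<Sum>i<?p. c i * dder (L1!i) f m)"
        by (rule sum.cong) (auto simp: d_def)
      have s2: "(\<Sum>i<length L2. d (?p + i) * dder (L2!i) f m) = (\<Sum>i<length L2. c (?p + Suc i) * dder (L2!i) f m)"
        by (rule sum.cong) (auto simp: d_def)
      show "(\<Sum>j<length (L1 @ L2). d j * dder ((L1 @ L2)!j) f m) =
          (\<Sum>j<length (L1 @ [v] @ L2). c j * dder ((L1 @ [v] @ L2)!j) f m)"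
        unfolding split split2 s1 s2 using True by simp
    qed
    have "(\<lambda>m. \<Sum>j<length (L1 @ L2). d j * dder ((L1 @ L2)!j) f m) \<in> P2fin"
      unfolding eq by (rule H)
    then have d0: "\<forall>j<length (L1 @ L2). d j = 0"
      using spec[OF q[unfolded qbar_lin_indep_def], of d] by simp
    show ?thesis
    proof (intro allI impI)
      fix j assume j: "j < length (L1 @ [v] @ L2)"
      show "c j = 0"
      proof (cases "j < ?p")
        case True then show ?thesis using d0[rule_format, of j] by (simp add: d_def)
      next
        case False
        show ?thesis
        proof (cases "j = ?p")
          case True then show ?thesis using \<open>c ?p = 0\<close> by simp
        next
          case False
          have gt: "j > ?p" using False \<open>\<not> j < ?p\<close> by simp
          define j' where "j' = j - 1"
          have j': "j = Suc j'" "j' \<ge> ?p" using gt unfolding j'_def by auto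
          then have "j' < length (L1 @ L2)" using j by simp
          then show ?thesis using d0[rule_format, of j'] j' by (simp add: d_def)
        qed
      qed
    qed
  qed
qed

lemma entries_snoc: "entries (T @ [(v, [])]) = entries T @ [v]"
  by (simp add: entries_def)

lemma fst_in_entries: "set (map fst T) \<subseteq> set (entries T)"
  by (auto simp: entries_def)

lemma snd_in_entries: "set (concat (map snd T)) \<subseteq> set (entries T)"
  by (auto simp: entries_def)

lemma alg2: "(a::'k::field) \<noteq> 0 \<Longrightarrow> S + a * x = 0 \<Longrightarrow> x = - S / a"
  by (simp add: field_simps add_eq_0_iff2)

lemma finish:
  fixes f :: "'i multiset \<Rightarrow> 'k::field"
  assumes good: "good_table f T"
    and vv: "v \<in> vecs" and g: "goodl f (entries T) v"
    and t1: "\<forall>e\<in>set (entries T). \<forall>e'\<in>set (entries T). tri f v e e' = 0 \<and> tri f e v e' = 0 \<and> tri f e e' v = 0"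
    and t2: "\<forall>e\<in>set (entries T). tri f v v e = 0 \<and> tri f v e v = 0 \<and> tri f e v v = 0"
    and t3: "tri f v v v = 0"
  shows "good_table f (T @ [(v, [])])"
proof -
  let ?E = "entries T"
  let ?P = "\<lambda>w. dder w f \<notin> P2fin"
  let ?L1 = "map fst T"
  let ?L2 = "filter ?P (concat (map snd T))"
  note G = good[unfolded good_table_def Let_def]
  have Ev: "set ?E \<subseteq> vecs" using G by (elim conjE) assumption
  have Eli: "lin_indep_vecs ?E" using G by (elim conjE) assumption
  have Erow: "\<forall>(v, ws)\<in>set T. \<forall>w\<in>set ws. tri f v w w = 1" using G by (elim conjE) assumption
  have Etri: "\<forall>x\<in>set ?E. \<forall>y\<in>set ?E. \<forall>z\<in>set ?E. tri f x y z \<noteq> 0 \<longrightarrow>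
       (\<exists>(v, ws)\<in>set T. \<exists>w\<in>set ws. {#x, y, z#} = {#v, w, w#})" using G by (elim conjE) assumption
  have Eq: "qbar_lin_indep f (?L1 @ ?L2)" using G by (elim conjE) assumption
  have A1: "set (?E @ [v]) \<subseteq> vecs" using Ev vv by simp
  have A2: "lin_indep_vecs (?E @ [v])"
    unfolding lin_indep_vecs_def
  proof (rule allI, rule impI)
    fix c :: "nat \<Rightarrow> 'k"
    assume H: "\<forall>i. (\<Sum>j<length (?E @ [v]). c j * ((?E @ [v])!j) i) = 0"
    let ?n = "length ?E"
    have H': "(\<Sum>j<?n. c j * (?E!j) i) + c ?n * v i = 0" for i
    proof -
      have "(\<Sum>j<length (?E @ [v]). c j * ((?E @ [v])!j) i) =
         (\<Sum>j<?n. c j * (?E!j) i) + (\<Sum>j<length [v]. c (?n + j) * ([v]!j) i)"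
        by (rule list_sum_append[where h = "\<lambda>j u. c j * u i"])
      moreover have "(\<Sum>j<length [v]. c (?n + j) * ([v]!j) i) = c ?n * v i" by simp
      moreover have "(\<Sum>j<length (?E @ [v]). c j * ((?E @ [v])!j) i) = 0" using H by blast
      ultimately show ?thesis by (simp only:)
    qed
    have Evj: "\<forall>j\<in>{..<?n}. ?E!j \<in> vecs" using Ev by auto
    have cn: "c ?n = 0"
    proof (rule ccontr)
      assume cn: "c ?n \<noteq> 0"
      let ?c = "\<lambda>j. - c j / c ?n"
      have vdef: "v = (\<lambda>i. \<Sum>j<?n. ?c j * (?E!j) i)"
      proof
        fix i
        have "(\<Sum>j<?n. ?c j * (?E!j) i) = (\<Sum>j<?n. - (c j * (?E!j) i) / c ?n)"
          by (rule sum.cong) auto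
        also have "\<dots> = - (\<Sum>j<?n. c j * (?E!j) i) / c ?n"
          by (simp add: sum_divide_distrib sum_negf)
        finally show "v i = (\<Sum>j<?n. ?c j * (?E!j) i)" using alg2[OF cn H'[of i]] by simp
      qed
      have dv: "dder v f = (\<lambda>m. \<Sum>j<?n. ?c j * dder (?E!j) f m)"
        unfolding vdef using dder_sum_vec[where x = "\<lambda>j. ?E!j" and I = "{..<?n}" and a = ?c, OF _ Evj] by simp
      have "(\<lambda>m. dder v f m - (\<Sum>j<?n. ?c j * dder (?E!j) f m)) = (\<lambda>m. 0)"
        unfolding dv by simp
      moreover have "(\<lambda>m. dder v f m - (\<Sum>j<?n. ?c j * dder (?E!j) f m)) \<notin> P2fin"
        using spec[OF g[unfolded goodl_def], of ?c] by simp
      ultimately have "(\<lambda>m. 0::'k) \<notin> (P2fin :: ('i multiset \<Rightarrow> 'k) set)" by (simp only: not_False_eq_True)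
      then show False using P2fin_zero by blast
    qed
    have "\<forall>i. (\<Sum>j<?n. c j * (?E!j) i) = 0" using H' cn by simp
    then have "\<forall>j<?n. c j = 0" using spec[OF Eli[unfolded lin_indep_vecs_def], of c] by simp
    then show "\<forall>j<length (?E @ [v]). c j = 0" using cn by (auto simp: less_Suc_eq)
  qed
  have A3: "\<forall>(a, ws)\<in>set (T @ [(v, [])]). \<forall>w\<in>set ws. tri f a w w = 1" using Erow by auto
  have A4: "\<forall>x\<in>set (?E @ [v]). \<forall>y\<in>set (?E @ [v]). \<forall>z\<in>set (?E @ [v]). tri f x y z \<noteq> 0 \<longrightarrow>
       (\<exists>(a, ws)\<in>set (T @ [(v, [])]). \<exists>w\<in>set ws. {#x, y, z#} = {#a, w, w#})"
  proof (intro ballI impI)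
    fix x y z assume xyz: "x \<in> set (?E @ [v])" "y \<in> set (?E @ [v])" "z \<in> set (?E @ [v])"
      and nz: "tri f x y z \<noteq> 0"
    have inE: "x \<in> set ?E \<and> y \<in> set ?E \<and> z \<in> set ?E"
    proof (rule ccontr)
      assume "\<not> (x \<in> set ?E \<and> y \<in> set ?E \<and> z \<in> set ?E)"
      then have xyz': "x = v \<or> y = v \<or> z = v" using xyz by auto
      have X: "x \<in> set ?E \<or> x = v" "y \<in> set ?E \<or> y = v" "z \<in> set ?E \<or> z = v" using xyz by auto
      have "tri f x y z = 0" using X xyz' t1 t2 t3 by auto
      with nz show False by simp
    qed
    then have "\<exists>(a, ws)\<in>set T. \<exists>w\<in>set ws. {#x, y, z#} = {#a, w, w#}" using Etri nz by blast
    then show "\<exists>(a, ws)\<in>set (T @ [(v, [])]). \<exists>w\<in>set ws. {#x, y, z#} = {#a, w, w#}" by auto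
  qed
  have Lsub: "set (?L1 @ ?L2) \<subseteq> set ?E" using fst_in_entries[of T] snd_in_entries[of T] by auto
  have gL: "goodl f (?L1 @ ?L2) v" by (rule goodl_sub[OF g Lsub])
  have A6: "qbar_lin_indep f (?L1 @ [v] @ ?L2)" by (rule qli_insert[OF Eq gL])
  have A5: "\<forall>j<length (?L1 @ [v] @ ?L2). \<forall>k<length (?L1 @ [v] @ ?L2). j \<noteq> k \<longrightarrow>
      (\<lambda>m. dder ((?L1 @ [v] @ ?L2)!j) f m - dder ((?L1 @ [v] @ ?L2)!k) f m) \<notin> P2fin"
    using qli_distinct[OF A6] by blast
  have eqL: "map fst (T @ [(v, [])]) @ filter ?P (concat (map snd (T @ [(v, [])]))) = ?L1 @ [v] @ ?L2"
    by simp
  show ?thesis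
    unfolding good_table_def Let_def entries_snoc eqL
    using A1 A2 A3 A4 A5 A6 by (intro conjI) assumption+
qed

lemma len3: "length (concat (map (\<lambda>e. [a e, b e, c e]) xs)) = 3 * length xs"
  by (induction xs) auto

lemma mem3: "e \<in> set xs \<Longrightarrow> a e \<in> set (concat (map (\<lambda>e. [a e, b e, c e]) xs)) \<and>
   b e \<in> set (concat (map (\<lambda>e. [a e, b e, c e]) xs)) \<and> c e \<in> set (concat (map (\<lambda>e. [a e, b e, c e]) xs))"
  by (induction xs) auto

lemma diag: "finite S \<Longrightarrow> i \<in> S \<Longrightarrow> (\<And>j. j \<in> S \<Longrightarrow> j \<noteq> i \<Longrightarrow> F j = (0::'a::comm_monoid_add)) \<Longrightarrow> sum F S = F i"
  by (simp add: sum.remove sum.neutral)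

lemma sum_restrict:
  assumes "finite T" "S \<subseteq> T"
  shows "(\<Sum>i\<in>T. if i \<in> S then X i else (0::'a::comm_monoid_add)) = (\<Sum>i\<in>S. X i)"
proof -
  have "(\<Sum>i\<in>T. if i \<in> S then X i else 0) = (\<Sum>i\<in>S. if i \<in> S then X i else 0)"
    using assms by (intro sum.mono_neutral_right) auto
  also have "\<dots> = (\<Sum>i\<in>S. X i)" by (rule sum.cong) auto
  finally show ?thesis .
qed

lemma tri_cubic:
  fixes f :: "'i multiset \<Rightarrow> 'k::field"
  shows "A \<in> vecs \<Longrightarrow> B \<in> vecs \<Longrightarrow> tri f (\<lambda>t. A t + s * B t) (\<lambda>t. A t + s * B t) (\<lambda>t. A t + s * B t) =
   poly [:tri f A A A, tri f B A A + tri f A B A + tri f A A B, tri f A B B + tri f B A B + tri f B B A, tri f B B B:] s"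
  by (simp add: tri_bin1 tri_bin2 tri_bin3 algebra_simps)

lemma sqrt_ex:
  fixes x :: "'k::field"
  assumes alg_closed: "\<forall>p :: 'k poly. degree p > 0 \<longrightarrow> (\<exists>x. poly p x = 0)"
  shows "\<exists>y. y * y = x"
proof -
  have "degree [:-x, 0, 1:] > 0" by simp
  then obtain y where "poly [:-x, 0, 1:] y = 0" using alg_closed by blast
  then have "y * y = x" by (simp add: algebra_simps)
  then show ?thesis by blast
qed

theorem lemma4p5:
  fixes f :: "'i multiset \<Rightarrow> 'k::field"
    and T :: "(('i \<Rightarrow> 'k) \<times> ('i \<Rightarrow> 'k) list) list"
  assumes alg_closed: "\<forall>p :: 'k poly. degree p > 0 \<longrightarrow> (\<exists>x. poly p x = 0)"
    and char2: "(2::'k) \<noteq> 0" and char3: "(3::'k) \<noteq> 0"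
    and cubic: "homog 3 f"
    and rrk: "rrk_infinite f"
    and good: "good_table f T"
  shows "\<exists>v. good_table f (T @ [(v, [])])"
proof -
  define E where "E = entries T"
  note G = good[unfolded good_table_def Let_def]
  have Ev: "set E \<subseteq> vecs" using G unfolding E_def by (elim conjE) assumption
  define n where "n = length E"
  define K where "K = 3 * n + 1"
  define M where "M = 2 * K"
  have KM: "K \<le> M" unfolding M_def by simp
  obtain us where us: "length us = M" "set us \<subseteq> vecs" and inv:
    "\<forall>k<M. goodl f (E @ take k us) (us!k) \<and>
       (\<forall>p\<in>set (E @ take k us). \<forall>q\<in>set (E @ take k us).
          tri f (us!k) p q = 0 \<and> tri f p (us!k) q = 0 \<and> tri f p q (us!k) = 0)"
    using build_us[OF rrk Ev, of M] by blast
  have usv: "\<forall>i\<in>{..<M}. us!i \<in> vecs"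
  proof
    fix i assume "i \<in> {..<M}"
    then have "i < length us" using us(1) by simp
    then show "us!i \<in> vecs" using us(2) nth_mem by blast
  qed
  have gd: "\<forall>k<length us. goodl f (E @ take k us) (us!k)" using inv us(1) by simp
  have inv2: "tri f (us!k) p q = 0 \<and> tri f p (us!k) q = 0 \<and> tri f p q (us!k) = 0"
    if "k < M" "p \<in> set (E @ take k us)" "q \<in> set (E @ take k us)" for k p q
    using inv that by blast
  have take_mem: "us!i \<in> set (E @ take k us)" if "i < k" "k \<le> M" for i k
  proof -
    have "take k us ! i = us!i" using that by simp
    moreover have "i < length (take k us)" using that us(1) by simp
    ultimately have "us!i \<in> set (take k us)" by (metis nth_mem)
    then show ?thesis by simp
  qed
  have offd: "tri f (us!i) (us!j) e = 0 \<and> tri f (us!i) e (us!j) = 0 \<and> tri f e (us!i) (us!j) = 0"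
    if ij: "i < M" "j < M" "i \<noteq> j" and e: "e \<in> set E" for i j e
  proof (cases "i < j")
    case True
    have ui: "us!i \<in> set (E @ take j us)" using take_mem[OF True] ij by simp
    have ee: "e \<in> set (E @ take j us)" using e by simp
    show ?thesis using inv2[OF ij(2) ui ee] inv2[OF ij(2) ee ui] by simp
  next
    case False
    then have ji: "j < i" using ij by simp
    have uj: "us!j \<in> set (E @ take i us)" using take_mem[OF ji] ij by simp
    have ee: "e \<in> set (E @ take i us)" using e by simp
    show ?thesis using inv2[OF ij(1) uj ee] inv2[OF ij(1) ee uj] by simp
  qed
  have lin1: "tri f (us!i) e e' = 0 \<and> tri f e (us!i) e' = 0 \<and> tri f e e' (us!i) = 0"
    if "i < M" "e \<in> set E" "e' \<in> set E" for i e e'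
    using inv2[of i e e'] that by simp
  define a1 where "a1 = (\<lambda>e i. tri f (us!i) (us!i) e)"
  define a2 where "a2 = (\<lambda>e i. tri f (us!i) e (us!i))"
  define a3 where "a3 = (\<lambda>e i. tri f e (us!i) (us!i))"
  define cs where "cs = concat (map (\<lambda>e. [a1 e, a2 e, a3 e]) E)"
  have lcs: "length cs = 3 * n" unfolding cs_def n_def by (rule len3)
  have mcs: "a1 e \<in> set cs \<and> a2 e \<in> set cs \<and> a3 e \<in> set cs" if "e \<in> set E" for e
    unfolding cs_def by (rule mem3[OF that])
  have c0: "length cs < card {..<K}" using lcs unfolding K_def by simp
  obtain b0 where b0: "\<exists>i\<in>{..<K}. b0 i \<noteq> 0" "\<forall>c\<in>set cs. (\<Sum>i\<in>{..<K}. c i * b0 i) = 0"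
    using linsys[OF _ c0] by blast
  have c1: "length cs < card {K..<M}" using lcs unfolding K_def M_def by simp
  obtain b1 where b1: "\<exists>i\<in>{K..<M}. b1 i \<noteq> 0" "\<forall>c\<in>set cs. (\<Sum>i\<in>{K..<M}. c i * b1 i) = 0"
    using linsys[OF _ c1] by blast
  have "\<forall>x::'k. \<exists>y. y * y = x" using sqrt_ex[OF alg_closed] by blast
  from choice[OF this] obtain sq :: "'k \<Rightarrow> 'k" where sqa: "\<forall>x. sq x * sq x = x" by blast
  have sq: "sq x * sq x = x" for x using sqa by blast
  define \<alpha> where "\<alpha> = (\<lambda>i. if i \<in> {..<K} then sq (b0 i) else 0)"
  define \<beta> where "\<beta> = (\<lambda>i. if i \<in> {K..<M} then sq (b1 i) else 0)"
  have ab: "\<alpha> i * \<beta> i = 0" for i by (simp add: \<alpha>_def \<beta>_def)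
  have Z0: "(\<Sum>i<M. \<alpha> i * \<alpha> i * c i) = 0" if "c \<in> set cs" for c
  proof -
    have "(\<Sum>i<M. \<alpha> i * \<alpha> i * c i) = (\<Sum>i\<in>{..<M}. if i \<in> {..<K} then c i * b0 i else 0)"
      by (rule sum.cong) (auto simp: \<alpha>_def sq)
    also have "\<dots> = (\<Sum>i\<in>{..<K}. c i * b0 i)" by (rule sum_restrict) (use KM in auto)
    also have "\<dots> = 0" using b0(2) that by blast
    finally show ?thesis .
  qed
  have Z1: "(\<Sum>i<M. \<beta> i * \<beta> i * c i) = 0" if "c \<in> set cs" for c
  proof -
    have "(\<Sum>i<M. \<beta> i * \<beta> i * c i) = (\<Sum>i\<in>{..<M}. if i \<in> {K..<M} then c i * b1 i else 0)"
      by (rule sum.cong) (auto simp: \<beta>_def sq)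
    also have "\<dots> = (\<Sum>i\<in>{K..<M}. c i * b1 i)" by (rule sum_restrict) auto
    also have "\<dots> = 0" using b1(2) that by blast
    finally show ?thesis .
  qed
  have S1: "tri f (\<lambda>t. \<Sum>i<M. a i * (us!i) t) p q = (\<Sum>i<M. a i * tri f (us!i) p q)" for a p q
    using tri_sum1[where x="\<lambda>i. us!i" and I="{..<M}", OF _ usv] by simp
  have S2: "tri f p (\<lambda>t. \<Sum>i<M. a i * (us!i) t) q = (\<Sum>i<M. a i * tri f p (us!i) q)" for a p q
    using tri_sum2[where x="\<lambda>i. us!i" and I="{..<M}", OF _ usv] by simp
  have S3: "tri f p q (\<lambda>t. \<Sum>i<M. a i * (us!i) t) = (\<Sum>i<M. a i * tri f p q (us!i))" for a p q
    using tri_sum3[where x="\<lambda>i. us!i" and I="{..<M}", OF _ usv] by simp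
  have Q: "tri f (\<lambda>t. \<Sum>i<M. a i * (us!i) t) (\<lambda>t. \<Sum>i<M. g i * (us!i) t) e = (\<Sum>i<M. a i * g i * a1 e i) \<and>
           tri f (\<lambda>t. \<Sum>i<M. a i * (us!i) t) e (\<lambda>t. \<Sum>i<M. g i * (us!i) t) = (\<Sum>i<M. a i * g i * a2 e i) \<and>
           tri f e (\<lambda>t. \<Sum>i<M. a i * (us!i) t) (\<lambda>t. \<Sum>i<M. g i * (us!i) t) = (\<Sum>i<M. a i * g i * a3 e i)"
    if e: "e \<in> set E" for a g e
  proof -
    have d1: "(\<Sum>j<M. g j * tri f (us!i) (us!j) e) = g i * tri f (us!i) (us!i) e" if "i \<in> {..<M}" for i
      by (rule diag) (use that offd e in auto)
    have d2: "(\<Sum>j<M. g j * tri f (us!i) e (us!j)) = g i * tri f (us!i) e (us!i)" if "i \<in> {..<M}" for i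
      by (rule diag) (use that offd e in auto)
    have d3: "(\<Sum>j<M. g j * tri f e (us!i) (us!j)) = g i * tri f e (us!i) (us!i)" if "i \<in> {..<M}" for i
      by (rule diag) (use that offd e in auto)
    have "tri f (\<lambda>t. \<Sum>i<M. a i * (us!i) t) (\<lambda>t. \<Sum>i<M. g i * (us!i) t) e = (\<Sum>i<M. a i * (\<Sum>j<M. g j * tri f (us!i) (us!j) e))"
      unfolding S1 S2 ..
    also have "\<dots> = (\<Sum>i<M. a i * g i * a1 e i)" by (rule sum.cong) (auto simp: d1 a1_def)
    finally have r1: "tri f (\<lambda>t. \<Sum>i<M. a i * (us!i) t) (\<lambda>t. \<Sum>i<M. g i * (us!i) t) e = (\<Sum>i<M. a i * g i * a1 e i)" .
    have "tri f (\<lambda>t. \<Sum>i<M. a i * (us!i) t) e (\<lambda>t. \<Sum>i<M. g i * (us!i) t) = (\<Sum>i<M. a i * (\<Sum>j<M. g j * tri f (us!i) e (us!j)))"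
      unfolding S1 S3 ..
    also have "\<dots> = (\<Sum>i<M. a i * g i * a2 e i)" by (rule sum.cong) (auto simp: d2 a2_def)
    finally have r2: "tri f (\<lambda>t. \<Sum>i<M. a i * (us!i) t) e (\<lambda>t. \<Sum>i<M. g i * (us!i) t) = (\<Sum>i<M. a i * g i * a2 e i)" .
    have "tri f e (\<lambda>t. \<Sum>i<M. a i * (us!i) t) (\<lambda>t. \<Sum>i<M. g i * (us!i) t) = (\<Sum>i<M. a i * (\<Sum>j<M. g j * tri f e (us!i) (us!j)))"
      unfolding S2 S3 ..
    also have "\<dots> = (\<Sum>i<M. a i * g i * a3 e i)" by (rule sum.cong) (auto simp: d3 a3_def)
    finally have r3: "tri f e (\<lambda>t. \<Sum>i<M. a i * (us!i) t) (\<lambda>t. \<Sum>i<M. g i * (us!i) t) = (\<Sum>i<M. a i * g i * a3 e i)" .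
    show ?thesis using r1 r2 r3 by blast
  qed
  have main: "\<exists>v. good_table f (T @ [(v, [])])"
    if gdef: "\<And>i. \<gamma> i * \<gamma> i = s0 * s0 * (\<alpha> i * \<alpha> i) + s1 * s1 * (\<beta> i * \<beta> i)"
      and nz: "\<exists>i<M. \<gamma> i \<noteq> 0"
      and cub: "tri f (\<lambda>t. \<Sum>i<M. \<gamma> i * (us!i) t) (\<lambda>t. \<Sum>i<M. \<gamma> i * (us!i) t) (\<lambda>t. \<Sum>i<M. \<gamma> i * (us!i) t) = 0"
    for \<gamma> s0 s1
  proof -
    define v where "v = (\<lambda>t. \<Sum>i<M. \<gamma> i * (us!i) t)"
    have vv: "v \<in> vecs" unfolding v_def using vecs_sum[where x="\<lambda>i. us!i" and I="{..<M}", OF _ usv] by simp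
    have gv: "goodl f E v" unfolding v_def using good_comb[OF us(2) gd, of M \<gamma>] us(1) nz by simp
    have quad: "(\<Sum>i<M. \<gamma> i * \<gamma> i * c i) = 0" if "c \<in> set cs" for c
    proof -
      have "(\<Sum>i<M. \<gamma> i * \<gamma> i * c i) = (\<Sum>i<M. (s0*s0) * (\<alpha> i * \<alpha> i * c i) + (s1*s1) * (\<beta> i * \<beta> i * c i))"
      proof (rule sum.cong[OF refl])
        fix i
        show "\<gamma> i * \<gamma> i * c i = (s0*s0) * (\<alpha> i * \<alpha> i * c i) + (s1*s1) * (\<beta> i * \<beta> i * c i)"
          unfolding gdef by (simp add: algebra_simps)
      qed
      also have "\<dots> = (s0*s0) * (\<Sum>i<M. \<alpha> i * \<alpha> i * c i) + (s1*s1) * (\<Sum>i<M. \<beta> i * \<beta> i * c i)"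
        by (simp add: sum.distrib sum_distrib_left)
      also have "\<dots> = 0" using Z0[OF that] Z1[OF that] by simp
      finally show ?thesis .
    qed
    have t1: "\<forall>e\<in>set E. \<forall>e'\<in>set E. tri f v e e' = 0 \<and> tri f e v e' = 0 \<and> tri f e e' v = 0"
    proof (intro ballI)
      fix e e' assume ee: "e \<in> set E" "e' \<in> set E"
      have z1: "(\<Sum>i<M. \<gamma> i * tri f (us!i) e e') = 0" by (rule sum.neutral) (use lin1 ee in auto)
      have z2: "(\<Sum>i<M. \<gamma> i * tri f e (us!i) e') = 0" by (rule sum.neutral) (use lin1 ee in auto)
      have z3: "(\<Sum>i<M. \<gamma> i * tri f e e' (us!i)) = 0" by (rule sum.neutral) (use lin1 ee in auto)
      show "tri f v e e' = 0 \<and> tri f e v e' = 0 \<and> tri f e e' v = 0"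
        unfolding v_def S1 S2 S3 z1 z2 z3 by simp
    qed
    have t2: "\<forall>e\<in>set E. tri f v v e = 0 \<and> tri f v e v = 0 \<and> tri f e v v = 0"
    proof
      fix e assume e: "e \<in> set E"
      note m = mcs[OF e]
      show "tri f v v e = 0 \<and> tri f v e v = 0 \<and> tri f e v v = 0"
        unfolding v_def using Q[OF e, of \<gamma> \<gamma>] quad[of "a1 e"] quad[of "a2 e"] quad[of "a3 e"] m by simp
    qed
    have t3: "tri f v v v = 0" unfolding v_def by (rule cub)
    show ?thesis
      using finish[OF good vv gv[unfolded E_def] t1[unfolded E_def] t2[unfolded E_def] t3] by blast
  qed
  define A where "A = (\<lambda>t. \<Sum>i<M. \<alpha> i * (us!i) t)"
  define B where "B = (\<lambda>t. \<Sum>i<M. \<beta> i * (us!i) t)"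
  have Av: "A \<in> vecs" unfolding A_def using vecs_sum[where x="\<lambda>i. us!i" and I="{..<M}", OF _ usv] by simp
  have Bv: "B \<in> vecs" unfolding B_def using vecs_sum[where x="\<lambda>i. us!i" and I="{..<M}", OF _ usv] by simp
  show ?thesis
  proof (cases "tri f B B B = 0")
    case True
    obtain i1 where i1: "i1 \<in> {K..<M}" "b1 i1 \<noteq> 0" using b1(1) by blast
    have "\<beta> i1 \<noteq> 0"
    proof
      assume "\<beta> i1 = 0"
      then have "\<beta> i1 * \<beta> i1 = 0" by simp
      then show False using i1 sq[of "b1 i1"] by (simp add: \<beta>_def)
    qed
    then have nz: "\<exists>i<M. \<beta> i \<noteq> 0" using i1 by auto
    have gdef: "\<beta> i * \<beta> i = 0 * 0 * (\<alpha> i * \<alpha> i) + 1 * 1 * (\<beta> i * \<beta> i)" for i by simp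
    show ?thesis by (rule main[OF gdef nz]) (use True in \<open>simp add: B_def\<close>)
  next
    case False
    let ?p = "[:tri f A A A, tri f B A A + tri f A B A + tri f A A B, tri f A B B + tri f B A B + tri f B B A, tri f B B B:]"
    have "degree ?p > 0" using False by simp
    then obtain s where s: "poly ?p s = 0" using alg_closed by blast
    define \<gamma> where "\<gamma> = (\<lambda>i. \<alpha> i + s * \<beta> i)"
    have gdef: "\<gamma> i * \<gamma> i = 1 * 1 * (\<alpha> i * \<alpha> i) + s * s * (\<beta> i * \<beta> i)" for i
    proof -
      have "\<gamma> i * \<gamma> i = \<alpha> i * \<alpha> i + 2 * s * (\<alpha> i * \<beta> i) + s * s * (\<beta> i * \<beta> i)"
        unfolding \<gamma>_def by (simp add: algebra_simps)
      then show ?thesis using ab[of i] by simp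
    qed
    obtain i0 where i0: "i0 \<in> {..<K}" "b0 i0 \<noteq> 0" using b0(1) by blast
    have "\<alpha> i0 \<noteq> 0"
    proof
      assume "\<alpha> i0 = 0"
      then have "\<alpha> i0 * \<alpha> i0 = 0" by simp
      then show False using i0 sq[of "b0 i0"] by (simp add: \<alpha>_def)
    qed
    moreover have "\<beta> i0 = 0" using i0 by (simp add: \<beta>_def)
    ultimately have "\<gamma> i0 \<noteq> 0" unfolding \<gamma>_def by simp
    then have nz: "\<exists>i<M. \<gamma> i \<noteq> 0" using i0 KM by (intro exI[of _ i0]) auto
    have veq: "(\<lambda>t. \<Sum>i<M. \<gamma> i * (us!i) t) = (\<lambda>t. A t + s * B t)"
    proof
      fix t
      show "(\<Sum>i<M. \<gamma> i * (us!i) t) = A t + s * B t"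
        unfolding \<gamma>_def A_def B_def by (simp add: algebra_simps sum.distrib sum_distrib_left)
    qed
    have cub: "tri f (\<lambda>t. \<Sum>i<M. \<gamma> i * (us!i) t) (\<lambda>t. \<Sum>i<M. \<gamma> i * (us!i) t) (\<lambda>t. \<Sum>i<M. \<gamma> i * (us!i) t) = 0"
      unfolding veq tri_cubic[OF Av Bv] by (rule s)
    show ?thesis by (rule main[OF gdef nz cub])
  qed
qed

end
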